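(* Let $X$ be the subshift obtained from the marker construction described in the context, and $\mu$ its unique shift-invariant Borel probability measure. Let $j\in\mathbb{N}$ and let $C_1,\dots,C_p$ be unpermuted words in $\mathcal{C}_j$ such that the concatenation $C_1\cdots C_p$ is a subword of some element of $\mathcal{C}_{j+1}$. Then $\mu([C_1]) = \mu([C_1\cdots C_p])$, where $[u] = \{x\in X : x_{[0,|u|)} = u\}$.
   Context: Marker construction. Let $l_1$ be a sufficiently large perfect square and $N_1 = 2^{\sqrt{l_1}}$. Let $\mathcal{C}_1$ be a set of $N_1$ binary words of length $l_1$, each beginning with $001$, such that the word $00$ occurs in each element of $\mathcal{C}_1$ only as its prefix. Inductively, given a set $\mathcal{C}_j$ of $N_j$ distinct words of length $l_j$ with an ordering $\mathcal{C}_j = \{u_1^{(j)},\dots,u_{N_j}^{(j)}\}$, let $P_j = \{2\}\cup\{i^2 : 2 \le i \le \lfloor\sqrt{N_j}\rfloor\}$, and let $\mathcal{C}_{j+1}$ be the set of all words $u^{(j)}_{\pi(1)}\cdots u^{(j)}_{\pi(N_j)}$ where $\pi$ ranges over permutations of $\{1,\dots,N_j\}$ fixing every element outside $P_j$. Thus $N_{j+1} = (\lfloor\sqrt{N_j}\rfloor)!$, $l_{j+1} = l_j N_j$. The ordering of $\mathcal{C}_{j+1}$ is arbitrary except that its first element is $u_1^{(j)}u_2^{(j)}\cdots u_{N_j}^{(j)}$. A word $u_i^{(j)}$ is permuted if $i \in P_j$ and unpermuted otherwise. $X \subset \{0,1\}^{\mathbb{Z}}$ is the set of bi-infinite sequences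 each finite subword of which is a subword of some word in $\bigcup_j \mathcal{C}_j$; it is uniquely ergodic. *)

theory Defs
  imports "HOL-Probability.Probability" "HOL-Library.Sublist"
begin

text \<open>Index set P_N = {2} \<union> {i^2 : 2 \<le> i \<le> floor(sqrt N)} (1-based indices).\<close>
definition Pset :: "nat \<Rightarrow> nat set" where
  "Pset N = {2} \<union> {i^2 | i. 2 \<le> i \<and> i \<le> nat \<lfloor>sqrt (real N)\<rfloor>}"

definition adm_perm :: "nat \<Rightarrow> (nat \<Rightarrow> nat) \<Rightarrow> bool" where
  "adm_perm N \<pi> \<longleftrightarrow> \<pi> permutes {1..N} \<and> (\<forall>i. i \<notin> Pset N \<longrightarrow> \<pi> i = i)"

definition perm_concat :: "'a list list \<Rightarrow> (nat \<Rightarrow> nat) \<Rightarrow> 'a list" where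
  "perm_concat us \<pi> = concat (map (\<lambda>i. us ! (\<pi> i - 1)) [1..<length us + 1])"

text \<open>The marker construction: C j is the ordered list of the words of level j (j \<ge> 1);
  C 0 is irrelevant. l1 is the length of level-1 words. Binary letters: False = 0, True = 1.\<close>
definition marker_construction :: "nat \<Rightarrow> (nat \<Rightarrow> bool list list) \<Rightarrow> bool" where
  "marker_construction l1 C \<longleftrightarrow>
     (\<exists>r. l1 = r^2 \<and> length (C 1) = 2^r) \<and>
     distinct (C 1) \<and>
     (\<forall>w\<in>set (C 1). length w = l1 \<and> take 3 w = [False, False, True] \<and>
        (\<forall>i. i + 1 < length w \<longrightarrow> w ! i = False \<longrightarrow> w ! (i+1) = False \<longrightarrow> i = 0)) \<and>
     (\<forall>j\<ge>1. distinct (C (Suc j)) \<and>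
        set (C (Suc j)) = {perm_concat (C j) \<pi> | \<pi>. adm_perm (length (C j)) \<pi>} \<and>
        C (Suc j) \<noteq> [] \<and> hd (C (Suc j)) = concat (C j))"

definition unpermuted :: "(nat \<Rightarrow> bool list list) \<Rightarrow> nat \<Rightarrow> bool list \<Rightarrow> bool" where
  "unpermuted C j u \<longleftrightarrow>
     (\<exists>i. 1 \<le> i \<and> i \<le> length (C j) \<and> i \<notin> Pset (length (C j)) \<and> u = C j ! (i - 1))"

definition subshift :: "(nat \<Rightarrow> bool list list) \<Rightarrow> (int \<Rightarrow> bool) set" where
  "subshift C = {x. \<forall>a::int. \<forall>n::nat. \<exists>j\<ge>1. \<exists>w\<in>set (C j).
                     sublist (map (\<lambda>k. x (a + int k)) [0..<n]) w}"

definition shift :: "(int \<Rightarrow> bool) \<Rightarrow> (int \<Rightarrow> bool)" where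
  "shift x = (\<lambda>n. x (n + 1))"

definition cyl :: "(int \<Rightarrow> bool) set \<Rightarrow> bool list \<Rightarrow> (int \<Rightarrow> bool) set" where
  "cyl X u = {x \<in> X. \<forall>k<length u. x (int k) = u ! k}"

text \<open>Shift-invariant Borel probability measure on X, viewed as a measure on {0,1}^Z
  (product sigma algebra = Borel sigma algebra of the Cantor space) concentrated on X.\<close>
definition inv_prob_on :: "(int \<Rightarrow> bool) set \<Rightarrow> (int \<Rightarrow> bool) measure \<Rightarrow> bool" where
  "inv_prob_on X M \<longleftrightarrow>
     prob_space M \<and>
     sets M = sets (Pi\<^sub>M UNIV (\<lambda>_::int. count_space (UNIV::bool set))) \<and>
     emeasure M X = 1 \<and>
     (\<forall>A\<in>sets M. emeasure M (shift -` A) = emeasure M A)"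

end

theory Submission
  imports Defs
begin

lemma mc_C1:
  assumes "marker_construction l1 C"
  shows "distinct (C 1) \<and> C 1 \<noteq> [] \<and>
     (\<forall>w\<in>set (C 1). length w = l1 \<and> take 3 w = [False, False, True] \<and>
        (\<forall>i. i + 1 < length w \<longrightarrow> w ! i = False \<longrightarrow> w ! (i+1) = False \<longrightarrow> i = 0))"
proof -
  note H = assms[unfolded marker_construction_def]
  from conjunct1[OF H] obtain r where "l1 = r^2 \<and> length (C 1) = 2^r" by (elim exE)
  hence ne: "C 1 \<noteq> []" by auto
  show ?thesis using conjunct1[OF conjunct2[OF H]] ne conjunct1[OF conjunct2[OF conjunct2[OF H]]]
    by (intro conjI)
qed

lemma mc_step:
  assumes "marker_construction l1 C" "j \<ge> 1"
  shows "distinct (C (Suc j)) \<and>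
        set (C (Suc j)) = {perm_concat (C j) \<pi> | \<pi>. adm_perm (length (C j)) \<pi>} \<and>
        C (Suc j) \<noteq> [] \<and> hd (C (Suc j)) = concat (C j)"
proof -
  note H = assms(1)[unfolded marker_construction_def]
  note E = conjunct2[OF conjunct2[OF conjunct2[OF H]]]
  show ?thesis using E[rule_format, OF assms(2)] .
qed

lemma mc_nonempty:
  assumes "marker_construction l1 C" "j \<ge> 1"
  shows "C j \<noteq> [] \<and> distinct (C j)"
proof (cases j)
  case 0 then show ?thesis using assms by simp
next
  case (Suc k)
  show ?thesis
  proof (cases k)
    case 0 then show ?thesis using mc_C1[OF assms(1)] Suc by simp
  next
    case (Suc k') then show ?thesis using mc_step[OF assms(1), of k] \<open>j = Suc k\<close> by simp
  qed
qed

lemma one_notin_Pset: "1 \<notin> Pset N"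
proof
  assume "1 \<in> Pset N"
  then obtain i :: nat where "1 = i^2" "2 \<le> i" unfolding Pset_def by auto
  moreover have "i^2 \<ge> 2^2" using \<open>2 \<le> i\<close> by (rule power_mono) simp
  ultimately show False by simp
qed

lemma take3_facts:
  assumes "take 3 u = [False, False, True]"
  shows "length u \<ge> 3 \<and> u!0 = False \<and> u!1 = False \<and> u!2 = True"
proof -
  have l: "length (take 3 u) = 3" using assms by simp
  hence "length u \<ge> 3" by simp
  moreover have "u!0 = take 3 u ! 0" "u!1 = take 3 u ! 1" "u!2 = take 3 u ! 2" by simp_all
  ultimately show ?thesis using assms by simp
qed

definition pi_of :: "(nat \<Rightarrow> bool list list) \<Rightarrow> nat \<Rightarrow> bool list \<Rightarrow> nat \<Rightarrow> nat" where
  "pi_of C j w = (SOME \<pi>. adm_perm (length (C j)) \<pi> \<and> w = perm_concat (C j) \<pi>)"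

definition blk :: "(nat \<Rightarrow> bool list list) \<Rightarrow> nat \<Rightarrow> bool list \<Rightarrow> bool list list" where
  "blk C j w = map (\<lambda>i. C j ! (pi_of C j w i - 1)) [1..<length (C j) + 1]"

lemma pi_of_props:
  assumes "marker_construction l1 C" "j \<ge> 1" "w \<in> set (C (Suc j))"
  shows "adm_perm (length (C j)) (pi_of C j w) \<and> w = perm_concat (C j) (pi_of C j w)"
proof -
  from assms mc_step[OF assms(1,2)] obtain \<pi> where "adm_perm (length (C j)) \<pi> \<and> w = perm_concat (C j) \<pi>"
    by auto
  thus ?thesis unfolding pi_of_def
    by (rule someI[of "\<lambda>\<pi>. adm_perm (length (C j)) \<pi> \<and> w = perm_concat (C j) \<pi>"])
qed

lemma blk_props:
  assumes "marker_construction l1 C" "j \<ge> 1" "w \<in> set (C (Suc j))"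
  shows "concat (blk C j w) = w" "length (blk C j w) = length (C j)"
    "set (blk C j w) \<subseteq> set (C j)"
    "\<And>r. r < length (C j) \<Longrightarrow> blk C j w ! r = C j ! (pi_of C j w (Suc r) - 1)"
proof -
  note P = pi_of_props[OF assms]
  show "concat (blk C j w) = w" using P unfolding blk_def perm_concat_def by simp
  show "length (blk C j w) = length (C j)" unfolding blk_def by (cases "length (C j)") auto
  show "\<And>r. r < length (C j) \<Longrightarrow> blk C j w ! r = C j ! (pi_of C j w (Suc r) - 1)"
    unfolding blk_def by (simp add: nth_upt del: upt_Suc)
  have perm: "pi_of C j w permutes {1..length (C j)}" using P unfolding adm_perm_def by simp
  show "set (blk C j w) \<subseteq> set (C j)"
  proof
    fix x assume "x \<in> set (blk C j w)"
    then obtain i where i0: "i \<in> set [1..<length (C j)+1]" "x = C j ! (pi_of C j w i - 1)"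
      unfolding blk_def by (auto simp del: upt_Suc)
    hence i: "i \<in> {1..length (C j)}" "x = C j ! (pi_of C j w i - 1)" by auto
    hence "pi_of C j w i \<in> {1..length (C j)}" using permutes_in_image[OF perm] by simp
    thus "x \<in> set (C j)" using i by auto
  qed
qed

lemma pi_of_perm:
  assumes "marker_construction l1 C" "j \<ge> 1" "w \<in> set (C (Suc j))"
  shows "pi_of C j w permutes {1..length (C j)}"
    "\<And>i. i \<notin> Pset (length (C j)) \<Longrightarrow> pi_of C j w i = i"
  using pi_of_props[OF assms] unfolding adm_perm_def by auto

lemma concat_len: "\<forall>x\<in>set xs. length x = L \<Longrightarrow> length (concat xs) = length xs * L"
  by (induction xs) auto

lemma concat_eq_prefix:
  assumes "\<forall>x\<in>set xs. length x = L" "\<forall>y\<in>set ys. length y = L" "L > 0"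
    "concat xs = concat ys @ b"
  shows "length ys \<le> length xs \<and> take (length ys) xs = ys"
  using assms
proof (induction ys arbitrary: xs)
  case Nil then show ?case by simp
next
  case (Cons y ys)
  have "concat xs \<noteq> []" using Cons.prems by auto
  then obtain x xs' where xs: "xs = x # xs'" by (cases xs) auto
  have "x @ concat xs' = y @ (concat ys @ b)" using Cons.prems xs by simp
  moreover have "length x = length y" using Cons.prems xs by simp
  ultimately have "x = y" "concat xs' = concat ys @ b" by auto
  with Cons.IH[of xs'] Cons.prems xs show ?case by auto
qed

lemma take_concat_blocks:
  "\<forall>x\<in>set xs. length x = L \<Longrightarrow> take (m*L) (concat xs) = concat (take m xs)"
proof (induction xs arbitrary: m)
  case Nil then show ?case by simp
next
  case (Cons x xs)
  show ?case
  proof (cases m)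
    case 0 then show ?thesis by simp
  next
    case (Suc m')
    have "take (m*L) (concat (x#xs)) = x @ take (m'*L) (concat xs)"
      using Cons.prems Suc by simp
    then show ?thesis using Cons Suc by simp
  qed
qed

lemma nth_concat_blocks:
  "\<forall>x\<in>set xss. length x = N \<Longrightarrow> q < length xss \<Longrightarrow> r < N \<Longrightarrow>
     concat xss ! (q*N + r) = xss!q!r"
proof (induction xss arbitrary: q)
  case Nil then show ?case by simp
next
  case (Cons x xss)
  show ?case
  proof (cases q)
    case 0 then show ?thesis using Cons.prems by (simp add: nth_append)
  next
    case (Suc q')
    have "concat (x#xss) ! (q*N + r) = concat xss ! (q'*N + r)"
      using Cons.prems Suc by (simp add: nth_append)
    then show ?thesis using Cons Suc by simp
  qed
qed

lemma finish:
  assumes "\<forall>x\<in>set ws. length x = L" "length u = L" "L > 0"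
    "concat ws = a @ u @ b" "a = concat (take m ws)"
  shows "m < length ws \<and> ws ! m = u"
proof -
  have "concat ws = concat (take m ws) @ concat (drop m ws)"
    by (metis append_take_drop_id concat_append)
  hence "concat (drop m ws) = concat [u] @ b" using assms(4,5) by simp
  moreover have "\<forall>x\<in>set (drop m ws). length x = L" using assms(1) by (meson in_set_dropD)
  ultimately have "1 \<le> length (drop m ws) \<and> take 1 (drop m ws) = [u]"
    using concat_eq_prefix[of "drop m ws" L "[u]" b] assms(2,3) by auto
  hence d: "take 1 (drop m ws) = [u]" "1 \<le> length (drop m ws)" by auto
  hence ml: "m < length ws" by simp
  moreover have "ws!m = drop m ws ! 0" using ml by simp
  moreover have "drop m ws ! 0 = u" using d by (cases "drop m ws") auto
  ultimately show ?thesis by simp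
qed

lemma base_core:
  assumes "\<forall>w\<in>set ws. take 3 w = [False,False,True] \<and>
      (\<forall>i. i+1 < length w \<longrightarrow> w!i = False \<longrightarrow> w!(i+1) = False \<longrightarrow> i = 0)"
    "take 3 u = [False,False,True]" "concat ws = a @ u @ b"
  shows "\<exists>m. a = concat (take m ws)"
  using assms
proof (induction ws arbitrary: a)
  case Nil then show ?case using take3_facts[OF Nil.prems(2)] by auto
next
  case (Cons v ws)
  have u: "length u \<ge> 3" "u!0 = False" "u!1 = False" "u!2 = True"
    using take3_facts[OF Cons.prems(2)] by auto
  have eq: "v @ concat ws = a @ u @ b" using Cons.prems(3) by simp
  show ?case
  proof (cases "length a \<ge> length v")
    case True
    have "v = take (length v) a" using arg_cong[OF eq, of "take (length v)"] True by simp
    moreover have "concat ws = drop (length v) a @ u @ b"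
      using arg_cong[OF eq, of "drop (length v)"] True by simp
    ultimately obtain m where "drop (length v) a = concat (take m ws)"
      using Cons.IH Cons.prems by auto
    hence "a = concat (take (Suc m) (v # ws))" using \<open>v = take (length v) a\<close>
      by (metis append_take_drop_id concat.simps(2) take_Suc_Cons)
    thus ?thesis by blast
  next
    case False
    show ?thesis
    proof (cases "a = []")
      case True then show ?thesis by (intro exI[of _ 0]) simp
    next
      case an: False
      define t where "t = length a"
      have tpos: "0 < t" "t < length v" using an False t_def by auto
      have s: "\<And>k. k < length u \<Longrightarrow> (v @ concat ws) ! (t + k) = u ! k"
        using eq t_def by (simp add: nth_append)
      have v: "take 3 v = [False,False,True] \<and>
        (\<forall>i. i+1 < length v \<longrightarrow> v!i = False \<longrightarrow> v!(i+1) = False \<longrightarrow> i = 0)"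
        using Cons.prems(1) by simp
      have un: "0 < length u" "1 < length u" "2 < length u" using u(1) by auto
      have vt: "v ! t = False" using s[of 0] u un tpos by (simp add: nth_append)
      show ?thesis
      proof (cases "t + 1 < length v")
        case True
        have "v ! (t+1) = False" using s[of 1] u un True by (simp add: nth_append)
        with vt v True tpos show ?thesis by auto
      next
        case False
        hence tl: "t + 1 = length v" using tpos by simp
        have "length (v @ concat ws) \<ge> t + 3" using eq u t_def by simp
        hence "ws \<noteq> []" using tl by (cases ws) auto
        then obtain v' ws' where ws: "ws = v' # ws'" by (cases ws) auto
        have "take 3 v' = [False,False,True]" using Cons.prems(1) ws by simp
        from take3_facts[OF this] have "v'!1 = False" "length v' \<ge> 3" by auto
        moreover have "(v @ concat ws) ! (t + 2) = v' ! 1"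
          using tl ws \<open>length v' \<ge> 3\<close> by (simp add: nth_append)
        ultimately show ?thesis using s[of 2] u un by simp
      qed
    qed
  qed
qed


lemma mc1_word:
  assumes "marker_construction l1 C" "w \<in> set (C 1)"
  shows "length w = l1" "take 3 w = [False, False, True]"
    "\<And>i. i + 1 < length w \<Longrightarrow> w ! i = False \<Longrightarrow> w ! (i+1) = False \<Longrightarrow> i = 0"
proof -
  have F: "\<forall>w\<in>set (C 1). length w = l1 \<and> take 3 w = [False, False, True] \<and>
        (\<forall>i. i + 1 < length w \<longrightarrow> w ! i = False \<longrightarrow> w ! (i+1) = False \<longrightarrow> i = 0)"
    using mc_C1[OF assms(1)] by (rule conjunct2[THEN conjunct2])
  have G: "length w = l1 \<and> take 3 w = [False, False, True] \<and>
        (\<forall>i. i + 1 < length w \<longrightarrow> w ! i = False \<longrightarrow> w ! (i+1) = False \<longrightarrow> i = 0)"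
    by (rule bspec[OF F assms(2)])
  show "length w = l1" by (rule conjunct1[OF G])
  show "take 3 w = [False, False, True]" by (rule conjunct1[OF conjunct2[OF G]])
  fix i assume a: "i + 1 < length w" "w ! i = False" "w ! (i+1) = False"
  have "\<forall>i. i + 1 < length w \<longrightarrow> w ! i = False \<longrightarrow> w ! (i+1) = False \<longrightarrow> i = 0"
    by (rule conjunct2[OF conjunct2[OF G]])
  from this[rule_format, OF a] show "i = 0" .
qed

lemma len_level:
  assumes mc: "marker_construction l1 C"
  shows "j \<ge> 1 \<Longrightarrow> \<exists>L>0. \<forall>w\<in>set (C j). length w = L"
proof (induction j rule: nat_induct_at_least)
  case base
  have "C 1 \<noteq> []" using mc_nonempty[OF mc] by simp
  then obtain w where w: "w \<in> set (C 1)" by (cases "C 1") auto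
  have "length w \<ge> 3" using take3_facts[OF mc1_word(2)[OF mc w]] by simp
  hence "l1 > 0" using mc1_word(1)[OF mc w] by simp
  moreover have "\<forall>w\<in>set (C 1). length w = l1" using mc1_word(1)[OF mc] by blast
  ultimately show ?case by (intro exI[of _ l1] conjI)
next
  case (Suc j)
  then obtain L where L: "L > 0" "\<forall>w\<in>set (C j). length w = L" by blast
  have "C j \<noteq> []" using mc_nonempty[OF mc Suc.hyps] by simp
  hence N: "length (C j) * L > 0" using L by simp
  have all: "\<forall>w\<in>set (C (Suc j)). length w = length (C j) * L"
  proof
    fix w assume w: "w \<in> set (C (Suc j))"
    note B = blk_props[OF mc Suc.hyps w]
    have "\<forall>x\<in>set (blk C j w). length x = L"
    proof
      fix x assume "x \<in> set (blk C j w)"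
      hence "x \<in> set (C j)" using B(3) by blast
      thus "length x = L" using L(2) by blast
    qed
    from concat_len[OF this] have "length (concat (blk C j w)) = length (C j) * L"
      using B(2) by simp
    thus "length w = length (C j) * L" using B(1) by simp
  qed
  from N all show ?case by (intro exI[of _ "length (C j) * L"] conjI)
qed

lemma concat_concat': "concat (concat xss) = concat (map concat xss)"
  by (induction xss) auto

lemma concat_blk:
  assumes "marker_construction l1 C" "j \<ge> 1" "ws \<in> lists (set (C (Suc j)))"
  shows "concat (concat (map (blk C j) ws)) = concat ws"
    "concat (map (blk C j) ws) \<in> lists (set (C j))"
    "length (concat (map (blk C j) ws)) = length ws * length (C j)"
proof -
  have W: "\<And>w. w \<in> set ws \<Longrightarrow> w \<in> set (C (Suc j))"
    using assms(3) by (simp add: in_lists_conv_set subset_iff)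
  have "map concat (map (blk C j) ws) = ws"
  proof (rule nth_equalityI)
    show "length (map concat (map (blk C j) ws)) = length ws" by simp
    fix i assume "i < length (map concat (map (blk C j) ws))"
    hence i: "i < length ws" by simp
    hence "ws ! i \<in> set (C (Suc j))" using W nth_mem by blast
    from blk_props(1)[OF assms(1,2) this] i
    show "map concat (map (blk C j) ws) ! i = ws ! i" by simp
  qed
  thus "concat (concat (map (blk C j) ws)) = concat ws" by (simp add: concat_concat')
  show "concat (map (blk C j) ws) \<in> lists (set (C j))"
    unfolding in_lists_conv_set
  proof
    fix x assume "x \<in> set (concat (map (blk C j) ws))"
    then obtain w where w: "w \<in> set ws" "x \<in> set (blk C j w)" by auto
    from blk_props(3)[OF assms(1,2) W[OF w(1)]] w(2) show "x \<in> set (C j)" by blast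
  qed
  have "\<forall>x\<in>set (map (blk C j) ws). length x = length (C j)"
  proof
    fix x assume "x \<in> set (map (blk C j) ws)"
    then obtain w where w: "w \<in> set ws" "x = blk C j w" by auto
    from blk_props(2)[OF assms(1,2) W[OF w(1)]] w(2) show "length x = length (C j)" by simp
  qed
  from concat_len[OF this] show "length (concat (map (blk C j) ws)) = length ws * length (C j)" by simp
qed

lemma nth_vs:
  assumes "marker_construction l1 C" "j \<ge> 1" "ws \<in> lists (set (C (Suc j)))"
    "q < length ws" "r < length (C j)"
  shows "concat (map (blk C j) ws) ! (q * length (C j) + r) =
     C j ! (pi_of C j (ws!q) (Suc r) - 1)"
proof -
  have "\<forall>x\<in>set (map (blk C j) ws). length x = length (C j)"
    using assms blk_props(2)[OF assms(1,2)] by auto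
  from nth_concat_blocks[OF this] assms(4,5)
  have "concat (map (blk C j) ws) ! (q * length (C j) + r) = blk C j (ws!q) ! r" by simp
  also have "\<dots> = C j ! (pi_of C j (ws!q) (Suc r) - 1)"
    using blk_props(4)[OF assms(1,2)] assms(3,4,5) by auto
  finally show ?thesis .
qed

lemma perm_index:
  assumes "marker_construction l1 C" "j \<ge> 1" "w \<in> set (C (Suc j))"
    "r < length (C j)" "1 \<le> i" "i \<le> length (C j)"
    "C j ! (pi_of C j w (Suc r) - 1) = C j ! (i - 1)"
  shows "pi_of C j w (Suc r) = i"
proof -
  note P = pi_of_perm[OF assms(1,2,3)]
  have "Suc r \<in> {1..length (C j)}" using assms(4) by simp
  hence "pi_of C j w (Suc r) \<in> {1..length (C j)}" using permutes_in_image[OF P(1)] by simp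
  moreover have "distinct (C j)" using mc_nonempty[OF assms(1,2)] by simp
  ultimately have "pi_of C j w (Suc r) - 1 = i - 1"
    using assms(5,6,7) nth_eq_iff_index_eq[of "C j"] by auto
  moreover have "pi_of C j w (Suc r) \<ge> 1" using \<open>pi_of C j w (Suc r) \<in> {1..length (C j)}\<close> by simp
  ultimately show ?thesis using assms(5) by arith
qed

lemma perm_fixed_inj:
  assumes "marker_construction l1 C" "j \<ge> 1" "w \<in> set (C (Suc j))"
    "pi_of C j w a = i" "i \<notin> Pset (length (C j))"
  shows "a = i"
proof -
  note P = pi_of_perm[OF assms(1,2,3)]
  have "pi_of C j w i = i" using P(2) assms(5) by simp
  moreover have "inj (pi_of C j w)" using permutes_inj[OF P(1)] .
  ultimately show ?thesis using assms(4) by (metis injD)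
qed

lemma align:
  assumes mc: "marker_construction l1 C"
  shows "j \<ge> 1 \<Longrightarrow> ws \<in> lists (set (C j)) \<Longrightarrow> u \<in> set (C j) \<Longrightarrow> concat ws = a @ u @ b \<Longrightarrow>
    \<exists>m<length ws. a = concat (take m ws) \<and> ws!m = u"
proof (induction j arbitrary: ws u a b rule: nat_induct_at_least)
  case base
  note F = mc_C1[OF mc]
  have "\<exists>m. a = concat (take m ws)"
    using base_core[of ws u a b] base.prems F by auto
  then obtain m where m: "a = concat (take m ws)" by blast
  have "l1 > 0" using F base.prems take3_facts[of u] by auto
  have "\<forall>x\<in>set ws. length x = l1" using F base.prems by auto
  from finish[OF this _ \<open>l1 > 0\<close> base.prems(3) m] base.prems F show ?case using m by auto
next
  case (Suc j)
  define N where "N = length (C j)"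
  define vs where "vs = concat (map (blk C j) ws)"
  note CB = concat_blk[OF mc Suc.hyps Suc.prems(1)]
  have vs: "concat vs = concat ws" "vs \<in> lists (set (C j))" "length vs = length ws * N"
    using CB unfolding vs_def N_def by auto
  have Npos: "N > 0" using mc_nonempty[OF mc Suc.hyps] N_def by simp
  note Bu = blk_props[OF mc Suc.hyps Suc.prems(2)]
  have "pi_of C j u 1 = 1" using pi_of_perm(2)[OF mc Suc.hyps Suc.prems(2)] one_notin_Pset by simp
  hence b0: "blk C j u ! 0 = C j ! 0" using Bu(4)[of 0] Npos N_def by simp
  have "blk C j u \<noteq> []" using Bu(2) Npos N_def by auto
  hence "blk C j u = C j ! 0 # tl (blk C j u)" using b0 by (cases "blk C j u") auto
  hence "u = C j ! 0 @ concat (tl (blk C j u))" using Bu(1) by (metis concat.simps(2))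
  hence eq: "concat vs = a @ C j ! 0 @ (concat (tl (blk C j u)) @ b)" using vs(1) Suc.prems(3) by simp
  have "C j ! 0 \<in> set (C j)" using Npos N_def by simp
  from Suc.IH[OF vs(2) this eq] obtain m where
    m: "m < length vs" "a = concat (take m vs)" "vs ! m = C j ! 0" by blast
  define q where "q = m div N"
  define r where "r = m mod N"
  have mqr: "m = q * N + r" unfolding q_def r_def by simp
  have rN: "r < N" unfolding r_def using Npos by simp
  have qw: "q < length ws"
  proof (rule ccontr)
    assume "\<not> q < length ws"
    hence "length ws * N \<le> q * N" by simp
    thus False using m(1) vs(3) mqr by linarith
  qed
  have wsq: "ws ! q \<in> set (C (Suc j))" using Suc.prems(1) qw by auto
  have "C j ! (pi_of C j (ws!q) (Suc r) - 1) = C j ! (1 - 1)"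
    using nth_vs[OF mc Suc.hyps Suc.prems(1) qw, of r] rN m(3) mqr N_def vs_def by simp
  from perm_index[OF mc Suc.hyps wsq _ _ _ this] rN Npos N_def
  have "pi_of C j (ws!q) (Suc r) = 1" by simp
  from perm_fixed_inj[OF mc Suc.hyps wsq this one_notin_Pset] have "r = 0" by simp
  hence "a = concat (take (q * N) vs)" using m(2) mqr by simp
  also have "\<dots> = concat (concat (take q (map (blk C j) ws)))"
  proof -
    have "\<forall>x\<in>set (map (blk C j) ws). length x = N"
      using Suc.prems(1) blk_props(2)[OF mc Suc.hyps] N_def by auto
    from take_concat_blocks[OF this] show ?thesis unfolding vs_def by simp
  qed
  also have "\<dots> = concat (take q ws)"
  proof -
    have "take q ws \<in> lists (set (C (Suc j)))" using Suc.prems(1) set_take_subset[of q ws] by auto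
    from concat_blk(1)[OF mc Suc.hyps this] show ?thesis by (simp add: take_map)
  qed
  finally have a: "a = concat (take q ws)" .
  obtain L where L: "L > 0" "\<forall>w\<in>set (C (Suc j)). length w = L"
    using len_level[OF mc, of "Suc j"] by auto
  have "\<forall>x\<in>set ws. length x = L" using L Suc.prems(1) by auto
  from finish[OF this _ L(1) Suc.prems(3) a] L Suc.prems(2) a show ?case by auto
qed


lemma sublist_in_concat: "x \<in> set xs \<Longrightarrow> sublist x (concat xs)"
proof -
  assume "x \<in> set xs"
  then obtain ys zs where "xs = ys @ x # zs" using split_list by metis
  thus ?thesis unfolding sublist_def by (intro exI[of _ "concat ys"] exI[of _ "concat zs"]) simp
qed

lemma up:
  assumes mc: "marker_construction l1 C" and k: "1 \<le> k" and w: "w \<in> set (C k)"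
  shows "k \<le> k' \<Longrightarrow> \<exists>w'\<in>set (C k'). sublist w w'"
proof (induction k' rule: nat_induct_at_least)
  case base
  show ?case using w by (intro bexI[of _ w]) simp_all
next
  case (Suc n)
  then obtain w' where w': "w' \<in> set (C n)" "sublist w w'" by blast
  have n1: "n \<ge> 1" using k Suc.hyps by simp
  note S = mc_step[OF mc n1]
  have "hd (C (Suc n)) \<in> set (C (Suc n))" using S by (intro hd_in_set) simp
  moreover have "sublist w' (hd (C (Suc n)))" using S sublist_in_concat[OF w'(1)] by simp
  ultimately show ?case using w'(2) sublist_order.order_trans by (intro bexI[of _ "hd (C (Suc n))"]) blast+
qed

lemma deep:
  assumes mc: "marker_construction l1 C" and j: "j \<ge> 1"
  shows "Suc j \<le> k \<Longrightarrow> W \<in> set (C k) \<Longrightarrow> \<exists>ws\<in>lists (set (C (Suc j))). W = concat ws"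
proof (induction k arbitrary: W rule: nat_induct_at_least)
  case base
  show ?case using base.prems by (intro bexI[of _ "[W]"]) simp_all
next
  case (Suc n)
  have n1: "n \<ge> 1" using Suc.hyps j by simp
  note B = blk_props[OF mc n1 Suc.prems]
  have "\<forall>e\<in>set (blk C n W). \<exists>ws. ws \<in> lists (set (C (Suc j))) \<and> e = concat ws"
  proof
    fix e assume "e \<in> set (blk C n W)"
    hence "e \<in> set (C n)" using B(3) by blast
    from Suc.IH[OF this] show "\<exists>ws. ws \<in> lists (set (C (Suc j))) \<and> e = concat ws" by blast
  qed
  then obtain f where f: "\<forall>e\<in>set (blk C n W). f e \<in> lists (set (C (Suc j))) \<and> e = concat (f e)"
    by (metis (no_types))
  have mm: "map (concat \<circ> f) (blk C n W) = blk C n W"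
    using f by (intro map_idI) simp
  have "W = concat (map concat (map f (blk C n W)))" unfolding map_map mm using B(1) by simp
  hence "W = concat (concat (map f (blk C n W)))" by (simp add: concat_concat')
  moreover have "concat (map f (blk C n W)) \<in> lists (set (C (Suc j)))"
    unfolding in_lists_conv_set
  proof
    fix x assume "x \<in> set (concat (map f (blk C n W)))"
    then obtain e where e: "e \<in> set (blk C n W)" "x \<in> set (f e)" by auto
    from f e(1) have "f e \<in> lists (set (C (Suc j)))" by blast
    with e(2) show "x \<in> set (C (Suc j))" by (simp add: in_lists_conv_set subset_iff)
  qed
  ultimately show ?case by blast
qed

lemma consec:
  assumes mc: "marker_construction l1 C" and j: "j \<ge> 1" and ne: "Cs \<noteq> []"
    and unp: "\<forall>c\<in>set Cs. unpermuted C j c" and w': "w' \<in> set (C (Suc j))"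
    and sub: "sublist (concat Cs) w'"
  shows "\<exists>m'. m' + length Cs \<le> length (C j) \<and>
    (\<forall>s<length Cs. Cs ! s = C j ! (m' + s) \<and> Suc (m' + s) \<notin> Pset (length (C j)))"
proof -
  define N where "N = length (C j)"
  obtain L where L: "L > 0" "\<forall>w\<in>set (C j). length w = L" using len_level[OF mc j] by blast
  define bs where "bs = blk C j w'"
  note B = blk_props[OF mc j w']
  have unpD: "\<And>c. c \<in> set Cs \<Longrightarrow> \<exists>i. 1 \<le> i \<and> i \<le> N \<and> i \<notin> Pset N \<and> c = C j ! (i - 1)"
    using unp unfolding unpermuted_def N_def by blast
  have CsC: "\<And>c. c \<in> set Cs \<Longrightarrow> c \<in> set (C j)"
  proof -
    fix c assume "c \<in> set Cs"
    from unpD[OF this] obtain i where "1 \<le> i" "i \<le> N" "c = C j ! (i - 1)" by blast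
    thus "c \<in> set (C j)" unfolding N_def by simp
  qed
  from sub obtain a' b' where wa: "w' = a' @ concat Cs @ b'" unfolding sublist_def by blast
  from ne obtain c1 cs where Cs: "Cs = c1 # cs" by (cases Cs) auto
  have c1: "c1 \<in> set (C j)" using CsC Cs by simp
  have bsl: "bs \<in> lists (set (C j))" using B(3) unfolding bs_def in_lists_conv_set by blast
  have "concat bs = a' @ c1 @ (concat cs @ b')" using B(1) wa Cs unfolding bs_def by simp
  from align[OF mc j bsl c1 this] obtain m' where
    m': "m' < length bs" "a' = concat (take m' bs)" by blast
  have "concat bs = concat (take m' bs) @ concat (drop m' bs)"
    by (metis append_take_drop_id concat_append)
  moreover have cb: "concat bs = w'" unfolding bs_def by (rule B(1))
  ultimately have "a' @ concat (drop m' bs) = a' @ (concat Cs @ b')"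
    using wa m'(2) by (simp only: append_assoc)
  hence dr: "concat (drop m' bs) = concat Cs @ b'" by (rule append_eq_append_conv[THEN iffD1, OF disjI1[OF refl], THEN conjunct2])
  have l1: "\<forall>x\<in>set (drop m' bs). length x = L"
  proof
    fix x assume "x \<in> set (drop m' bs)"
    hence "x \<in> set bs" by (rule in_set_dropD)
    hence "x \<in> set (C j)" using B(3) unfolding bs_def by blast
    thus "length x = L" using L(2) by blast
  qed
  have l2: "\<forall>x\<in>set Cs. length x = L" using CsC L(2) by blast
  from concat_eq_prefix[OF l1 l2 L(1) dr]
  have pre: "length Cs \<le> length (drop m' bs)" "take (length Cs) (drop m' bs) = Cs" by auto
  have lbs: "length bs = N" using B(2) unfolding bs_def N_def by simp
  have bound: "m' + length Cs \<le> N" using pre(1) lbs m'(1) by simp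
  have "\<forall>s<length Cs. Cs ! s = C j ! (m' + s) \<and> Suc (m' + s) \<notin> Pset N"
  proof (intro allI impI)
    fix s assume s: "s < length Cs"
    have ms: "m' + s < N" using s bound by simp
    have "Cs ! s = take (length Cs) (drop m' bs) ! s" using pre(2) by simp
    also have "\<dots> = bs ! (m' + s)" using s ms lbs by simp
    also have "\<dots> = C j ! (pi_of C j w' (Suc (m' + s)) - 1)"
      using B(4)[of "m' + s"] ms unfolding bs_def N_def by simp
    finally have e1: "Cs ! s = C j ! (pi_of C j w' (Suc (m' + s)) - 1)" .
    have "Cs ! s \<in> set Cs" using s by simp
    from unpD[OF this] obtain i where i: "1 \<le> i" "i \<le> N" "i \<notin> Pset N" "Cs ! s = C j ! (i - 1)"
      by blast
    have "pi_of C j w' (Suc (m' + s)) = i"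
      using perm_index[OF mc j w', of "m' + s" i] ms i e1 unfolding N_def by simp
    from perm_fixed_inj[OF mc j w' this] i(3) have "Suc (m' + s) = i" unfolding N_def by simp
    hence "i - 1 = m' + s" by simp
    thus "Cs ! s = C j ! (m' + s) \<and> Suc (m' + s) \<notin> Pset N" using i \<open>Suc (m' + s) = i\<close> by simp
  qed
  with bound show ?thesis unfolding N_def by blast
qed


lemma main_set:
  assumes mc: "marker_construction l1 C" and j: "j \<ge> 1" and ne: "Cs \<noteq> []"
    and unp: "\<forall>c\<in>set Cs. unpermuted C j c" and w': "w' \<in> set (C (Suc j))"
    and sub: "sublist (concat Cs) w'"
  shows "cyl (subshift C) (hd Cs) = cyl (subshift C) (concat Cs)"
proof
  have cs: "concat Cs = hd Cs @ concat (tl Cs)" using ne by (cases Cs) auto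
  show "cyl (subshift C) (concat Cs) \<subseteq> cyl (subshift C) (hd Cs)"
  proof
    fix x assume "x \<in> cyl (subshift C) (concat Cs)"
    hence x: "x \<in> subshift C" "\<forall>k<length (concat Cs). x (int k) = concat Cs ! k"
      unfolding cyl_def by auto
    have "\<forall>k<length (hd Cs). x (int k) = hd Cs ! k"
    proof (intro allI impI)
      fix k assume k: "k < length (hd Cs)"
      hence "k < length (concat Cs)" using cs by (metis length_append trans_less_add1)
      hence "x (int k) = concat Cs ! k" using x(2) by blast
      also have "\<dots> = hd Cs ! k" using k cs by (simp add: nth_append)
      finally show "x (int k) = hd Cs ! k" .
    qed
    with x(1) show "x \<in> cyl (subshift C) (hd Cs)" unfolding cyl_def by blast
  qed
  show "cyl (subshift C) (hd Cs) \<subseteq> cyl (subshift C) (concat Cs)"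
  proof
    fix x assume "x \<in> cyl (subshift C) (hd Cs)"
    hence xX: "x \<in> subshift C" and hx: "\<forall>k<length (hd Cs). x (int k) = hd Cs ! k"
      unfolding cyl_def by auto
    define n where "n = length (concat Cs)"
    define y where "y = map (\<lambda>k. x (int k)) [0..<n]"
    define c1 where "c1 = hd Cs"
    define p where "p = length Cs"
    define N where "N = length (C j)"
    have ppos: "p > 0" using ne p_def by simp
    have "\<forall>a::int. \<forall>n::nat. \<exists>j\<ge>1. \<exists>w\<in>set (C j).
                     sublist (map (\<lambda>k. x (a + int k)) [0..<n]) w"
      using xX unfolding subshift_def by blast
    hence "\<exists>k0\<ge>1. \<exists>w\<in>set (C k0). sublist (map (\<lambda>k. x (0 + int k)) [0..<n]) w" by blast
    then obtain k0 w0 where k0: "k0 \<ge> 1" "w0 \<in> set (C k0)" "sublist y w0"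
      unfolding y_def by auto
    define K where "K = max k0 (Suc j)"
    from up[OF mc k0(1,2), of K] obtain W where W: "W \<in> set (C K)" "sublist w0 W"
      unfolding K_def by auto
    have yW: "sublist y W" using k0(3) W(2) sublist_order.order_trans by blast
    from deep[OF mc j, of K W] W(1) obtain ws where
      ws: "ws \<in> lists (set (C (Suc j)))" "W = concat ws" unfolding K_def by auto
    define vs where "vs = concat (map (blk C j) ws)"
    note CB = concat_blk[OF mc j ws(1)]
    have vs: "concat vs = W" "vs \<in> lists (set (C j))" "length vs = length ws * N"
      using CB ws(2) unfolding vs_def N_def by auto
    from yW obtain pre suf where Wy: "W = pre @ y @ suf" unfolding sublist_def by blast
    from consec[OF mc j ne unp w' sub] obtain m' where
      m': "m' + p \<le> N" "\<forall>s<p. Cs ! s = C j ! (m' + s) \<and> Suc (m' + s) \<notin> Pset N"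
      unfolding p_def N_def by blast
    have c1m: "c1 = C j ! m'" using m'(2) ppos unfolding c1_def by (cases Cs) (auto simp: ne)
    have c1C: "c1 \<in> set (C j)" using c1m m'(1) ppos unfolding N_def by simp
    have lc1: "length c1 \<le> n" using cs unfolding n_def c1_def by simp
    have ty: "take (length c1) y = c1"
    proof (rule nth_equalityI)
      show "length (take (length c1) y) = length c1" using lc1 unfolding y_def by simp
      fix k assume "k < length (take (length c1) y)"
      hence k: "k < length c1" using lc1 unfolding y_def by simp
      have "take (length c1) y ! k = y ! k" using k by simp
      also have "\<dots> = x (int k)" using k lc1 unfolding y_def by simp
      also have "\<dots> = c1 ! k" using hx k unfolding c1_def by blast
      finally show "take (length c1) y ! k = c1 ! k" .
    qed
    have "y = c1 @ drop (length c1) y" using ty by (metis append_take_drop_id)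
    hence "concat vs = pre @ c1 @ (drop (length c1) y @ suf)" using vs(1) Wy by simp
    from align[OF mc j vs(2) c1C this] obtain m where
      m: "m < length vs" "pre = concat (take m vs)" "vs ! m = c1" by blast
    have Npos: "N > 0" using m'(1) ppos by simp
    define q where "q = m div N"
    define r where "r = m mod N"
    have mqr: "m = q * N + r" unfolding q_def r_def by simp
    have rN: "r < N" unfolding r_def using Npos by simp
    have qw: "q < length ws"
    proof (rule ccontr)
      assume "\<not> q < length ws"
      hence "length ws * N \<le> q * N" by simp
      thus False using m(1) vs(3) mqr by linarith
    qed
    have wsq: "ws ! q \<in> set (C (Suc j))" using ws(1) qw by (simp add: in_lists_conv_set)
    have nvs: "\<And>t. t < N \<Longrightarrow> vs ! (q * N + t) = C j ! (pi_of C j (ws!q) (Suc t) - 1)"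
      using nth_vs[OF mc j ws(1) qw] unfolding vs_def N_def by blast
    have "C j ! (pi_of C j (ws!q) (Suc r) - 1) = C j ! (Suc m' - 1)"
      using nvs[OF rN] m(3) mqr c1m by simp
    from perm_index[OF mc j wsq _ _ _ this] rN m'(1) ppos
    have "pi_of C j (ws!q) (Suc r) = Suc m'" unfolding N_def by simp
    moreover have "Suc m' \<notin> Pset N" using m'(2) ppos by auto
    ultimately have "Suc r = Suc m'" using perm_fixed_inj[OF mc j wsq] unfolding N_def by blast
    hence rm: "r = m'" by simp
    have "Suc q \<le> length ws" using qw by simp
    hence "Suc q * N \<le> length ws * N" by (rule mult_le_mono1)
    hence mp: "m + p \<le> length vs" using vs(3) mqr rm m'(1) by simp
    have tk: "take p (drop m vs) = Cs"
    proof (rule nth_equalityI)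
      show "length (take p (drop m vs)) = length Cs" using mp unfolding p_def by simp
      fix s assume "s < length (take p (drop m vs))"
      hence s: "s < p" using mp by simp
      have "take p (drop m vs) ! s = vs ! (q * N + (m' + s))" using s mp mqr rm
        by (simp add: add.assoc)
      also have "\<dots> = C j ! (pi_of C j (ws!q) (Suc (m' + s)) - 1)"
        using nvs[of "m' + s"] s m'(1) by simp
      also have "pi_of C j (ws!q) (Suc (m' + s)) = Suc (m' + s)"
        using pi_of_perm(2)[OF mc j wsq] m'(2) s unfolding N_def by blast
      also have "C j ! (Suc (m' + s) - 1) = Cs ! s" using m'(2) s by simp
      finally show "take p (drop m vs) ! s = Cs ! s" .
    qed
    have "vs = take m vs @ take p (drop m vs) @ drop p (drop m vs)" by (simp only: append_take_drop_id)
    hence "concat vs = pre @ concat Cs @ concat (drop p (drop m vs))"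
      using m(2) tk by (metis concat_append)
    hence "pre @ (y @ suf) = pre @ (concat Cs @ concat (drop p (drop m vs)))"
      using vs(1) Wy by simp
    hence "y @ suf = concat Cs @ concat (drop p (drop m vs))"
      by (rule append_eq_append_conv[THEN iffD1, OF disjI1[OF refl], THEN conjunct2])
    moreover have "length y = length (concat Cs)" unfolding y_def n_def by simp
    ultimately have yc: "y = concat Cs" by simp
    have "\<forall>k<length (concat Cs). x (int k) = concat Cs ! k"
    proof (intro allI impI)
      fix k assume k: "k < length (concat Cs)"
      have "x (int k) = y ! k" using k unfolding y_def n_def by simp
      thus "x (int k) = concat Cs ! k" using yc by simp
    qed
    with xX show "x \<in> cyl (subshift C) (concat Cs)" unfolding cyl_def by blast
  qed
qed

lemma key:
  assumes mc: "marker_construction l1 C"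
  shows "j \<ge> 1 \<and> Cs \<noteq> [] \<and> (\<forall>c\<in>set Cs. unpermuted C j c) \<and>
          (\<exists>w\<in>set (C (Suc j)). sublist (concat Cs) w) \<longrightarrow>
          measure M (cyl (subshift C) (hd Cs)) = measure M (cyl (subshift C) (concat Cs))"
proof
  assume H: "j \<ge> 1 \<and> Cs \<noteq> [] \<and> (\<forall>c\<in>set Cs. unpermuted C j c) \<and>
          (\<exists>w\<in>set (C (Suc j)). sublist (concat Cs) w)"
  then obtain w where w: "w \<in> set (C (Suc j))" "sublist (concat Cs) w" by blast
  from H have "j \<ge> 1" "Cs \<noteq> []" "\<forall>c\<in>set Cs. unpermuted C j c" by auto
  from main_set[OF mc this w] show "measure M (cyl (subshift C) (hd Cs)) = measure M (cyl (subshift C) (concat Cs))"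
    by simp
qed

theorem lemma4p3:
  shows "\<exists>L0::nat. \<forall>l1\<ge>L0. \<forall>C. marker_construction l1 C \<longrightarrow>
     (\<forall>M. inv_prob_on (subshift C) M \<longrightarrow>
       (\<forall>(j::nat) (Cs::bool list list).
          j \<ge> 1 \<and> Cs \<noteq> [] \<and> (\<forall>c\<in>set Cs. unpermuted C j c) \<and>
          (\<exists>w\<in>set (C (Suc j)). sublist (concat Cs) w) \<longrightarrow>
          measure M (cyl (subshift C) (hd Cs)) = measure M (cyl (subshift C) (concat Cs))))"
proof (rule exI[of _ 0], intro allI impI)
  fix l1 C M j Cs
  assume "0 \<le> l1" and mc: "marker_construction l1 C" and "inv_prob_on (subshift C) M"
    and H: "j \<ge> 1 \<and> Cs \<noteq> [] \<and> (\<forall>c\<in>set Cs. unpermuted C j c) \<and>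
          (\<exists>w\<in>set (C (Suc j)). sublist (concat Cs) w)"
  show "measure M (cyl (subshift C) (hd Cs)) = measure M (cyl (subshift C) (concat Cs))"
    by (rule mp[OF key[OF mc] H])
qed

end
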